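(* Let $N\ge1$ and $T_{\rm poll}\ge 1$ be integers, and let $\tau^1,\dots,\tau^N$ be i.i.d. geometric random variables with parameter $p$, i.e. $\mathbb P(\tau^j>t)=(1-p)^t$ for all $t\in\mathbb N\cup\{0\}$. Define $$M=\min\{m\ge 1:\ \exists\, j\in\{1,\dots,N\}\text{ such that }\tau^j\le mT_{\rm poll}\},\qquad K=\min\{j\in\{1,\dots,N\}:\ \tau^j\le MT_{\rm poll}\},$$ $$\xi=(N-1)(M-1)T_{\rm poll}+(K-1)T_{\rm poll}+\tau^K.$$ Then $\xi$ has the same law as $\tau^1$. *)

theory Defs
  imports "HOL-Probability.Probability"
begin

definition Mpoll :: "nat \<Rightarrow> nat \<Rightarrow> (nat \<Rightarrow> 'a \<Rightarrow> nat) \<Rightarrow> 'a \<Rightarrow> nat" where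
  "Mpoll N T \<tau> x = (LEAST m. 1 \<le> m \<and> (\<exists>j\<in>{1..N}. \<tau> j x \<le> m * T))"

definition Kidx :: "nat \<Rightarrow> nat \<Rightarrow> (nat \<Rightarrow> 'a \<Rightarrow> nat) \<Rightarrow> 'a \<Rightarrow> nat" where
  "Kidx N T \<tau> x = (LEAST j. j \<in> {1..N} \<and> \<tau> j x \<le> Mpoll N T \<tau> x * T)"

text \<open>xi = (N-1)(M-1)T + (K-1)T + tau^K (M, K >= 1, so nat subtraction is exact)\<close>
definition xi :: "nat \<Rightarrow> nat \<Rightarrow> (nat \<Rightarrow> 'a \<Rightarrow> nat) \<Rightarrow> 'a \<Rightarrow> nat" where
  "xi N T \<tau> x = (N - 1) * (Mpoll N T \<tau> x - 1) * T + (Kidx N T \<tau> x - 1) * T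
                 + \<tau> (Kidx N T \<tau> x) x"

end

theory Submission
  imports Defs
begin

lemma Mpoll_facts:
  fixes \<tau> :: "nat \<Rightarrow> 'a \<Rightarrow> nat"
  assumes N: "N \<ge> 1" and T: "T \<ge> 1"
  shows "1 \<le> Mpoll N T \<tau> x \<and> (\<exists>j\<in>{1..N}. \<tau> j x \<le> Mpoll N T \<tau> x * T)"
    and "\<And>m' j. 1 \<le> m' \<Longrightarrow> m' < Mpoll N T \<tau> x \<Longrightarrow> j \<in> {1..N} \<Longrightarrow> \<tau> j x > m' * T"
proof -
  let ?P = "\<lambda>m. 1 \<le> m \<and> (\<exists>j\<in>{1..N}. \<tau> j x \<le> m * T)"
  have ex: "?P (max 1 (\<tau> 1 x))"
    using N T by (intro conjI bexI[of _ 1]) (auto intro: order_trans[OF _ mult_le_mono[of _ _ 1 T]])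
  show "1 \<le> Mpoll N T \<tau> x \<and> (\<exists>j\<in>{1..N}. \<tau> j x \<le> Mpoll N T \<tau> x * T)"
    unfolding Mpoll_def by (rule LeastI[of ?P, OF ex])
  fix m' j assume "1 \<le> m'" "m' < Mpoll N T \<tau> x" "j \<in> {1..N}"
  then show "\<tau> j x > m' * T"
    using not_less_Least[of m' ?P] unfolding Mpoll_def by (auto simp: not_le)
qed

lemma Kidx_facts:
  fixes \<tau> :: "nat \<Rightarrow> 'a \<Rightarrow> nat"
  assumes N: "N \<ge> 1" and T: "T \<ge> 1"
  shows "Kidx N T \<tau> x \<in> {1..N} \<and> \<tau> (Kidx N T \<tau> x) x \<le> Mpoll N T \<tau> x * T"
    and "\<And>j. j \<in> {1..N} \<Longrightarrow> j < Kidx N T \<tau> x \<Longrightarrow> \<tau> j x > Mpoll N T \<tau> x * T"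
proof -
  let ?P = "\<lambda>j. j \<in> {1..N} \<and> \<tau> j x \<le> Mpoll N T \<tau> x * T"
  from Mpoll_facts(1)[OF N T, of \<tau> x] obtain j where "?P j" by auto
  then show "Kidx N T \<tau> x \<in> {1..N} \<and> \<tau> (Kidx N T \<tau> x) x \<le> Mpoll N T \<tau> x * T"
    unfolding Kidx_def by (rule LeastI)
  fix j assume "j \<in> {1..N}" "j < Kidx N T \<tau> x"
  then show "\<tau> j x > Mpoll N T \<tau> x * T"
    using not_less_Least[of j ?P] unfolding Kidx_def by auto
qed

lemma decomp_unique:
  fixes N T m k r m' k' r' :: nat
  assumes "1 \<le> k" "k \<le> N" "1 \<le> r" "r \<le> T" "1 \<le> k'" "k' \<le> N" "1 \<le> r'" "r' \<le> T"
    "1 \<le> m" "1 \<le> m'"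
    and eq: "N*(m-1)*T + (k-1)*T + r = N*(m'-1)*T + (k'-1)*T + r'"
  shows "m = m' \<and> k = k' \<and> r = r'"
proof -
  have e1: "N*(m-1)*T + (k-1)*T + r - 1 = (N*(m-1) + (k-1))*T + (r-1)"
    using assms by (simp add: algebra_simps)
  have e2: "N*(m'-1)*T + (k'-1)*T + r' - 1 = (N*(m'-1) + (k'-1))*T + (r'-1)"
    using assms by (simp add: algebra_simps)
  have eqa: "(N*(m-1) + (k-1))*T + (r-1) = (N*(m'-1) + (k'-1))*T + (r'-1)"
    using e1 e2 eq by simp
  have h: "\<And>a b c::nat. b < c \<Longrightarrow> (a*c+b) mod c = b \<and> (a*c+b) div c = a" by auto
  have r1: "r - 1 < T" "r' - 1 < T" "k - 1 < N" "k' - 1 < N" using assms by auto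
  have q: "N*(m-1) + (k-1) = N*(m'-1) + (k'-1)" and rr: "r - 1 = r' - 1"
    using h[OF r1(1), of "N*(m-1) + (k-1)"] h[OF r1(2), of "N*(m'-1) + (k'-1)"] eqa by metis+
  have "m - 1 = m' - 1 \<and> k - 1 = k' - 1"
    using h[OF r1(3), of "m-1"] h[OF r1(4), of "m'-1"] q by (metis mult.commute)
  then show ?thesis using rr assms by (metis Suc_pred' le_add_diff_inverse2 less_eq_Suc_le)
qed

lemma xi_char:
  fixes \<tau> :: "nat \<Rightarrow> 'a \<Rightarrow> nat"
  assumes N: "N \<ge> 1" and T: "T \<ge> 1" and pos: "\<forall>j\<in>{1..N}. \<tau> j x \<ge> 1"
    and m: "1 \<le> m" and k: "1 \<le> k" "k \<le> N" and r: "1 \<le> r" "r \<le> T"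
  shows "xi N T \<tau> x = N*(m-1)*T + (k-1)*T + r \<longleftrightarrow>
    (\<forall>j\<in>{1..N}. (j < k \<longrightarrow> \<tau> j x > m*T) \<and> (j = k \<longrightarrow> \<tau> j x = (m-1)*T + r)
       \<and> (k < j \<longrightarrow> \<tau> j x > (m-1)*T))"
proof -
  define M where "M = Mpoll N T \<tau> x"
  define K where "K = Kidx N T \<tau> x"
  have M1: "1 \<le> M" "\<exists>j\<in>{1..N}. \<tau> j x \<le> M * T"
    using Mpoll_facts(1)[OF N T, of \<tau> x] unfolding M_def by auto
  have Mlt: "\<And>m' j. 1 \<le> m' \<Longrightarrow> m' < M \<Longrightarrow> j \<in> {1..N} \<Longrightarrow> \<tau> j x > m' * T"
    unfolding M_def by (rule Mpoll_facts(2)[OF N T])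
  have K1: "K \<in> {1..N}" "\<tau> K x \<le> M * T"
    using Kidx_facts(1)[OF N T, of \<tau> x] unfolding M_def K_def by auto
  have Klt: "\<And>j. j \<in> {1..N} \<Longrightarrow> j < K \<Longrightarrow> \<tau> j x > M * T"
    unfolding M_def K_def by (rule Kidx_facts(2)[OF N T])
  have allgt: "\<forall>j\<in>{1..N}. \<tau> j x > (M-1)*T"
  proof
    fix j assume j: "j \<in> {1..N}"
    show "\<tau> j x > (M-1)*T"
    proof (cases "M = 1")
      case True
      have "\<tau> j x \<ge> 1" using pos j by blast
      then show ?thesis using True by simp
    next
      case False then show ?thesis using Mlt[of "M-1" j] M1 j by auto
    qed
  qed
  define r' where "r' = \<tau> K x - (M-1)*T"
  have MT: "M*T = (M-1)*T + T" using M1 by (cases M) auto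
  have gK: "(M-1)*T < \<tau> K x" using allgt K1(1) by blast
  have tK: "\<tau> K x = (M-1)*T + r'" using gK unfolding r'_def by linarith
  have r'b1: "1 \<le> r'" using gK unfolding r'_def by linarith
  have r'b2: "r' \<le> T" using K1(2) unfolding r'_def MT by linarith
  note r'b = r'b1 r'b2
  have xiK: "xi N T \<tau> x = N*(M-1)*T + (K-1)*T + r'"
  proof -
    have "xi N T \<tau> x = (N-1)*(M-1)*T + (K-1)*T + ((M-1)*T + r')"
      unfolding xi_def M_def[symmetric] K_def[symmetric] tK ..
    also have "(N-1)*(M-1)*T + (M-1)*T = N*(M-1)*T"
    proof -
      have "\<And>X. (N-1)*X + X = N*X" using N by (cases N) auto
      from this[of "(M-1)*T"] show ?thesis by (simp add: mult.assoc)
    qed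
    ultimately show ?thesis by simp
  qed
  show ?thesis
  proof
    assume asm: "xi N T \<tau> x = N*(m-1)*T + (k-1)*T + r"
    have KK: "1 \<le> K" "K \<le> N" using K1(1) by auto
    have eq: "N*(m-1)*T + (k-1)*T + r = N*(M-1)*T + (K-1)*T + r'" using xiK asm by simp
    have eqs: "m = M \<and> k = K \<and> r = r'"
      by (rule decomp_unique[OF k(1) k(2) r(1) r(2) KK(1) KK(2) r'b1 r'b2 m M1(1) eq])
    show "\<forall>j\<in>{1..N}. (j < k \<longrightarrow> \<tau> j x > m*T) \<and> (j = k \<longrightarrow> \<tau> j x = (m-1)*T + r)
       \<and> (k < j \<longrightarrow> \<tau> j x > (m-1)*T)"
    proof
      fix j assume j: "j \<in> {1..N}"
      have a: "j < k \<longrightarrow> \<tau> j x > m*T" using Klt[OF j] eqs by simp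
      have b: "j = k \<longrightarrow> \<tau> j x = (m-1)*T + r" using tK eqs by simp
      have c: "k < j \<longrightarrow> \<tau> j x > (m-1)*T" using allgt j eqs by simp
      show "(j < k \<longrightarrow> \<tau> j x > m*T) \<and> (j = k \<longrightarrow> \<tau> j x = (m-1)*T + r)
       \<and> (k < j \<longrightarrow> \<tau> j x > (m-1)*T)" using a b c by blast
    qed
  next
    assume H: "\<forall>j\<in>{1..N}. (j < k \<longrightarrow> \<tau> j x > m*T) \<and> (j = k \<longrightarrow> \<tau> j x = (m-1)*T + r)
       \<and> (k < j \<longrightarrow> \<tau> j x > (m-1)*T)"
    have kin: "k \<in> {1..N}" using k by auto
    have mT: "m*T = (m-1)*T + T" using m by (cases m) auto
    have gtm: "\<forall>j\<in>{1..N}. \<tau> j x > (m-1)*T"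
    proof
      fix j assume j: "j \<in> {1..N}"
      show "\<tau> j x > (m-1)*T"
      proof -
        have "j < k \<or> j = k \<or> k < j" by arith
        moreover have "j < k \<Longrightarrow> ?thesis"
        proof -
          assume "j < k" then have "\<tau> j x > m*T" using H j by blast
          then show ?thesis unfolding mT by linarith
        qed
        moreover have "j = k \<Longrightarrow> ?thesis" using H j r by fastforce
        moreover have "k < j \<Longrightarrow> ?thesis" using H j by fastforce
        ultimately show ?thesis by blast
      qed
    qed
    have "M \<le> m"
    proof -
      have "\<tau> k x = (m-1)*T + r" using H kin by blast
      then have "\<tau> k x \<le> m * T" unfolding mT using r by linarith
      then show ?thesis unfolding M_def Mpoll_def using kin m by (intro Least_le) blast
    qed
    moreover have "\<not> M < m"
    proof
      assume "M < m"
      then have "M*T \<le> (m-1)*T" by auto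
      then show False using M1(2) gtm by (meson not_le order_trans)
    qed
    ultimately have Mm: "M = m" by auto
    have "K \<le> k"
    proof -
      have "\<tau> k x = (m-1)*T + r" using H kin by blast
      then have "\<tau> k x \<le> M * T" unfolding Mm mT using r by linarith
      then show ?thesis unfolding K_def Kidx_def M_def[symmetric] using kin by (intro Least_le) blast
    qed
    moreover have "\<not> K < k" using H K1 Mm by (metis not_le)
    ultimately have Kk: "K = k" by auto
    have "r' = r" using tK H kin Kk Mm by auto
    then show "xi N T \<tau> x = N*(m-1)*T + (k-1)*T + r" using xiK Mm Kk by simp
  qed
qed

lemma prod_three:
  fixes a b c :: real
  assumes k: "1 \<le> k" "k \<le> N"
  shows "(\<Prod>j\<in>{1..N}. if j < k then a else if j = k then b else c) = a^(k-1) * b * c^(N-k)"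
proof -
  have U: "{1..N} = {1..<k} \<union> insert k {k<..N}" using k by auto
  have "(\<Prod>j\<in>{1..N}. if j < k then a else if j = k then b else c)
     = (\<Prod>j\<in>{1..<k}. if j < k then a else if j = k then b else c) *
       (\<Prod>j\<in>insert k {k<..N}. if j < k then a else if j = k then b else c)"
    unfolding U by (rule prod.union_disjoint) auto
  also have "(\<Prod>j\<in>{1..<k}. if j < k then a else if j = k then b else c) = (\<Prod>j\<in>{1..<k}. a)"
    by (rule prod.cong) auto
  also have "(\<Prod>j\<in>insert k {k<..N}. if j < k then a else if j = k then b else c)
      = b * (\<Prod>j\<in>{k<..N}. if j < k then a else if j = k then b else c)"
    by (subst prod.insert) auto
  also have "(\<Prod>j\<in>{k<..N}. if j < k then a else if j = k then b else c) = (\<Prod>j\<in>{k<..N}. c)"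
    by (rule prod.cong) auto
  finally show ?thesis by simp
qed

lemma exp_arith:
  fixes N T m k r :: nat
  assumes "1 \<le> m" "1 \<le> k" "k \<le> N" "1 \<le> r"
  shows "m*T*(k-1) + ((m-1)*T + r - 1) + (m-1)*T*(N-k) = N*(m-1)*T + (k-1)*T + r - 1"
proof -
  obtain m0 where m0: "m = Suc m0" using assms by (cases m) auto
  obtain r0 where r0: "r = Suc r0" using assms by (cases r) auto
  obtain k0 where k0: "k = Suc k0" using assms by (cases k) auto
  obtain d where d: "N = k + d" using assms by (metis le_add_diff_inverse)
  show ?thesis unfolding m0 r0 k0 d by (simp add: algebra_simps)
qed

theorem lemma1:
  fixes P :: "'a measure" and \<tau> :: "nat \<Rightarrow> 'a \<Rightarrow> nat"
    and N T :: nat and p :: real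
  assumes "prob_space P"
    and "N \<ge> 1" and "T \<ge> 1"
    and "0 < p" and "p \<le> 1"
    and "prob_space.indep_vars P (\<lambda>_. count_space UNIV) \<tau> {1..N}"
    and "\<And>j t. j \<in> {1..N} \<Longrightarrow> measure P {x \<in> space P. \<tau> j x > t} = (1 - p) ^ t"
  shows "distr P (count_space UNIV) (xi N T \<tau>) = distr P (count_space UNIV) (\<tau> 1)"
proof -
  interpret prob_space P by fact
  note N = assms(2) and T = assms(3) and ind = assms(6) and tail = assms(7)
  define q where "q = 1 - p"
  define S where "S = {1..N::nat}"
  have meas: "\<And>j. j \<in> S \<Longrightarrow> \<tau> j \<in> measurable P (count_space UNIV)"
    using ind unfolding indep_vars_def2 S_def by auto
  have indS: "indep_sets (\<lambda>i. {\<tau> i -` A \<inter> space P | A. A \<in> sets (count_space UNIV)}) S"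
    using ind unfolding indep_vars_def2 S_def by auto
  have evs: "\<And>j B. j \<in> S \<Longrightarrow> \<tau> j -` B \<inter> space P \<in> sets P"
    using meas by (auto intro: measurable_sets)
  have tail': "\<And>j t. j \<in> S \<Longrightarrow> prob (\<tau> j -` {t<..} \<inter> space P) = q ^ t"
  proof -
    fix j t assume j: "j \<in> S"
    have "\<tau> j -` {t<..} \<inter> space P = {x \<in> space P. \<tau> j x > t}" by auto
    then show "prob (\<tau> j -` {t<..} \<inter> space P) = q ^ t" using tail[of j t] j unfolding S_def q_def by simp
  qed
  have geo: "\<And>j t. j \<in> S \<Longrightarrow> prob (\<tau> j -` {t} \<inter> space P) = (if t = 0 then 0 else q^(t-1)*p)"
  proof -
    fix j t assume j: "j \<in> S"
    show "prob (\<tau> j -` {t} \<inter> space P) = (if t = 0 then 0 else q^(t-1)*p)"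
    proof (cases t)
      case 0
      have "\<tau> j -` {t} \<inter> space P = space P - (\<tau> j -` {0<..} \<inter> space P)" using 0 by auto
      then have "prob (\<tau> j -` {t} \<inter> space P) = 1 - prob (\<tau> j -` {0<..} \<inter> space P)"
        using prob_compl[OF evs[OF j]] by simp
      then show ?thesis using tail'[OF j, of 0] 0 by simp
    next
      case (Suc s)
      have "\<tau> j -` {t} \<inter> space P = (\<tau> j -` {s<..} \<inter> space P) - (\<tau> j -` {Suc s<..} \<inter> space P)"
        using Suc by auto
      then have "prob (\<tau> j -` {t} \<inter> space P) = prob (\<tau> j -` {s<..} \<inter> space P) - prob (\<tau> j -` {Suc s<..} \<inter> space P)"
        using finite_measure_Diff[OF evs[OF j, of "{s<..}"] evs[OF j, of "{Suc s<..}"]] by fastforce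
      then show ?thesis using tail'[OF j, of s] tail'[OF j, of "Suc s"] Suc unfolding q_def
        by (simp add: algebra_simps)
    qed
  qed
  have G: "AE x in P. \<forall>j\<in>S. \<tau> j x \<ge> 1"
  proof (rule eventually_ball_finite)
    show "finite S" unfolding S_def by simp
    show "\<forall>j\<in>S. AE x in P. 1 \<le> \<tau> j x"
    proof
      fix j assume j: "j \<in> S"
      have e: "{x \<in> space P. \<not> 1 \<le> \<tau> j x} = \<tau> j -` {0} \<inter> space P" by auto
      show "AE x in P. 1 \<le> \<tau> j x"
        using AE_iff_measurable[OF evs[OF j, of "{0}"] e] geo[OF j, of 0]
        by (simp add: emeasure_eq_measure)
    qed
  qed
  define \<tau>' where "\<tau>' j = (if j \<in> S then \<tau> j else (\<lambda>_. 0::nat))" for j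
  have meas': "\<And>j. \<tau>' j \<in> measurable P (count_space UNIV)"
    unfolding \<tau>'_def using meas by auto
  have xieq: "xi N T \<tau> x = xi N T \<tau>' x" for x
  proof -
    have "Mpoll N T \<tau> x = Mpoll N T \<tau>' x"
      unfolding Mpoll_def \<tau>'_def S_def by (intro arg_cong[where f=Least] ext) auto
    moreover have "Kidx N T \<tau> x = Kidx N T \<tau>' x"
      unfolding Kidx_def using \<open>Mpoll N T \<tau> x = Mpoll N T \<tau>' x\<close>
      unfolding \<tau>'_def S_def by (intro arg_cong[where f=Least] ext) auto
    moreover have "Kidx N T \<tau> x \<in> S" using Kidx_facts(1)[OF N T, of \<tau> x] unfolding S_def by (elim conjE)
    ultimately show ?thesis unfolding xi_def \<tau>'_def by simp
  qed
  have xim: "xi N T \<tau> \<in> measurable P (count_space UNIV)"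
  proof -
    have "xi N T \<tau>' \<in> measurable P (count_space UNIV)"
      unfolding xi_def Kidx_def Mpoll_def using meas'[measurable] by measurable
    then show ?thesis using xieq by (simp add: fun_eq_iff[symmetric] xieq[abs_def])
  qed
  have Sne: "S \<noteq> {}" "finite S" unfolding S_def using N by auto
  have key: "prob (xi N T \<tau> -` {n} \<inter> space P) = prob (\<tau> 1 -` {n} \<inter> space P)" for n
  proof (cases "n = 0")
    case True
    have "prob (xi N T \<tau> -` {n} \<inter> space P) = prob {}"
    proof (rule measure_eq_AE)
      show "AE x in P. (x \<in> xi N T \<tau> -` {n} \<inter> space P) = (x \<in> {})"
        using G
      proof eventually_elim
        case (elim x)
        have "Kidx N T \<tau> x \<in> S" using Kidx_facts(1)[OF N T, of \<tau> x] unfolding S_def by (elim conjE)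
        then have "\<tau> (Kidx N T \<tau> x) x \<ge> 1" using elim by blast
        then have "xi N T \<tau> x \<ge> 1" unfolding xi_def by simp
        then show ?case using True by auto
      qed
      show "xi N T \<tau> -` {n} \<inter> space P \<in> sets P" using xim by (auto intro: measurable_sets)
    qed simp
    then show ?thesis using geo[of 1 n] True unfolding S_def using N by simp
  next
    case False
    define m where "m = (n-1) div (N*T) + 1"
    define k where "k = ((n-1) div T) mod N + 1"
    define r where "r = (n-1) mod T + 1"
    have m1: "1 \<le> m" unfolding m_def by simp
    have k1: "1 \<le> k" "k \<le> N" unfolding k_def using N by (auto simp: Suc_le_eq)
    have r1: "1 \<le> r" "r \<le> T" unfolding r_def using T by (auto simp: Suc_le_eq)
    have ndec: "n = N*(m-1)*T + (k-1)*T + r"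
    proof -
      define A where "A = (n-1) div (N*T)"
      define B where "B = (n-1) div T mod N"
      define C where "C = (n-1) mod T"
      have a: "n - 1 = ((n-1) div T) * T + C" unfolding C_def by simp
      have b: "(n-1) div T = N * ((n-1) div T div N) + B" unfolding B_def by simp
      have c: "(n-1) div T div N = A" unfolding A_def by (simp add: div_mult2_eq[symmetric] mult.commute)
      have d: "(n-1) div T = N*A + B" using b c by simp
      have e: "n - 1 = (N*A + B)*T + C" using a unfolding d .
      have f: "m - 1 = A" "k - 1 = B" "r = C + 1" unfolding m_def k_def r_def A_def B_def C_def by simp_all
      have "n = (n - 1) + 1" using False by simp
      also have "\<dots> = N*A*T + B*T + (C + 1)" unfolding e by (simp add: algebra_simps)
      finally show ?thesis unfolding f .
    qed
    define Bs where "Bs j = (if j < k then {m*T<..} else if j = k then {(m-1)*T + r} else {(m-1)*T<..})" for j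
    define A where "A j = \<tau> j -` Bs j \<inter> space P" for j
    have Aev: "\<And>j. j \<in> S \<Longrightarrow> A j \<in> sets P" unfolding A_def using evs by blast
    have "prob (xi N T \<tau> -` {n} \<inter> space P) = prob (\<Inter>j\<in>S. A j)"
    proof (rule measure_eq_AE)
      show "AE x in P. (x \<in> xi N T \<tau> -` {n} \<inter> space P) = (x \<in> (\<Inter>j\<in>S. A j))"
        using G AE_space
      proof eventually_elim
        case (elim x)
        have pos: "\<forall>j\<in>{1..N}. \<tau> j x \<ge> 1" using elim unfolding S_def by blast
        have "xi N T \<tau> x = n \<longleftrightarrow> (\<forall>j\<in>{1..N}. (j < k \<longrightarrow> \<tau> j x > m*T) \<and> (j = k \<longrightarrow> \<tau> j x = (m-1)*T + r)
           \<and> (k < j \<longrightarrow> \<tau> j x > (m-1)*T))"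
          unfolding ndec by (rule xi_char[of N T \<tau> x m k r, OF N T pos m1 k1 r1])
        also have "\<dots> \<longleftrightarrow> (\<forall>j\<in>S. \<tau> j x \<in> Bs j)"
          unfolding S_def Bs_def by (intro ball_cong refl) auto
        finally show ?case unfolding A_def using elim Sne by auto
      qed
      show "xi N T \<tau> -` {n} \<inter> space P \<in> sets P" using xim by (auto intro: measurable_sets)
      show "(\<Inter>j\<in>S. A j) \<in> sets P" using Aev Sne by (intro sets.finite_INT) auto
    qed
    also have "\<dots> = (\<Prod>j\<in>S. prob (A j))"
    proof -
      have ii: "\<forall>J\<subseteq>S. J \<noteq> {} \<longrightarrow> finite J \<longrightarrow> (\<forall>A\<in>Pi J (\<lambda>i. {\<tau> i -` A \<inter> space P | A. A \<in> sets (count_space UNIV)}).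
          prob (\<Inter>j\<in>J. A j) = (\<Prod>j\<in>J. prob (A j)))"
        using indS unfolding indep_sets_def by blast
      have "A \<in> Pi S (\<lambda>i. {\<tau> i -` A \<inter> space P | A. A \<in> sets (count_space UNIV)})"
        unfolding A_def by auto
      from ii[rule_format, OF order_refl Sne(1) Sne(2) this] show ?thesis .
    qed
    also have "\<dots> = (\<Prod>j\<in>S. if j < k then q^(m*T) else if j = k then q^((m-1)*T + r - 1) * p else q^((m-1)*T))"
    proof (rule prod.cong[OF refl])
      fix j assume j: "j \<in> S"
      show "prob (A j) = (if j < k then q^(m*T) else if j = k then q^((m-1)*T + r - 1) * p else q^((m-1)*T))"
        unfolding A_def Bs_def using tail'[OF j] geo[OF j] r1 by auto
    qed
    also have "\<dots> = (q^(m*T)) ^ (k-1) * (q^((m-1)*T + r - 1) * p) * (q^((m-1)*T)) ^ (N-k)"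
      unfolding S_def by (rule prod_three[OF k1])
    also have "\<dots> = q^(m*T*(k-1) + ((m-1)*T + r - 1) + (m-1)*T*(N-k)) * p"
      by (simp add: power_add power_mult)
    also have "\<dots> = q^(n-1) * p" unfolding exp_arith[OF m1 k1(1) k1(2) r1(1)] ndec ..
    also have "\<dots> = prob (\<tau> 1 -` {n} \<inter> space P)" using geo[of 1 n] False N unfolding S_def by simp
    finally show ?thesis .
  qed
  have m1: "\<tau> 1 \<in> measurable P (count_space UNIV)" using meas N unfolding S_def by auto
  show ?thesis
  proof (rule measure_eqI_countable[where A=UNIV])
    fix n :: nat
    show "emeasure (distr P (count_space UNIV) (xi N T \<tau>)) {n} = emeasure (distr P (count_space UNIV) (\<tau> 1)) {n}"
      using key[of n] xim m1 by (simp add: emeasure_distr emeasure_eq_measure)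
  qed auto
qed

end
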